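(* Let $\mathcal A=\{\ell_1,\dots,\ell_n\}$ be an arrangement of affine lines in $\mathbb C^2$, and let $\langle\beta_1,\dots,\beta_n\mid R_1,\dots,R_\nu\rangle$ be a finite presentation of $\pi_1(M(\mathcal A))$ in which $\beta_i$ is an elementary loop around $\ell_i$. Let $N\subset F_n$ be the normal closure of $R_1,\dots,R_\nu$ in the free group $F_n$ on $\beta_1,\dots,\beta_n$. Then the following are equivalent: (a) the $\mathbb Z[t^{\pm1}]$-submodule of $\mathbb Z[t^{\pm1}]^n$ generated by the vectors $v_j=\big((\partial R_j/\partial\beta_1)^\varphi,\dots,(\partial R_j/\partial\beta_n)^\varphi\big)$, $j=1,\dots,\nu$, equals $(1-t)\{x\in\mathbb Z[t^{\pm1}]^n:\sum_i x_i=0\}$; (b) $[F_n,F_n]=N\,[\ker\varphi,\ker\varphi]$. Equivalently, $\pi_1(M(\mathcal A))$ is abelian modulo the image of $[\ker\varphi,\ker\varphi]$.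
   Context: $M(\mathcal A)=\mathbb C^2\setminus\bigcup\ell_i$. $\varphi:F_n\to\langle t\rangle\cong\mathbb Z$ is the length homomorphism with $\varphi(\beta_i)=t$ for all $i$; it extends to a ring homomorphism $\mathbb Z[F_n]\to\mathbb Z[t^{\pm1}]$, and for $u\in\mathbb Z[F_n]$ we write $u^\varphi$ for its image. $\partial/\partial\beta_i:\mathbb Z[F_n]\to\mathbb Z[F_n]$ are the Fox free derivatives. Commutators are $[a,b]=aba^{-1}b^{-1}$. (Condition (a) is what the paper calls "$\mathcal A$ is a-monodromic over $\mathbb Z$".) *)

theory Defs
  imports "HOL-Algebra.Algebra" "HOL-Library.Poly_Mapping"
begin

text \<open>A letter (True, i) stands for beta_i, a letter (False, i) for the inverse of beta_i.
  Elements of F_n are freely reduced words in these letters.\<close>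

type_synonym letter = "bool \<times> nat"
type_synonym word = "letter list"

fun inv_letter :: "letter \<Rightarrow> letter" where
  "inv_letter (b, i) = (\<not> b, i)"

fun reduced :: "word \<Rightarrow> bool" where
  "reduced [] = True"
| "reduced [a] = True"
| "reduced (a # b # w) = (b \<noteq> inv_letter a \<and> reduced (b # w))"

fun cancel1 :: "letter \<Rightarrow> word \<Rightarrow> word" where
  "cancel1 a [] = [a]"
| "cancel1 a (b # w) = (if b = inv_letter a then w else a # b # w)"

definition reduce :: "word \<Rightarrow> word" where
  "reduce w = foldr cancel1 w []"

definition free_group :: "nat \<Rightarrow> word monoid" where
  "free_group n = \<lparr> carrier = {w. reduced w \<and> (\<forall>a \<in> set w. snd a < n)},
                   monoid.mult = (\<lambda>u v. reduce (u @ v)),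
                   monoid.one = [] \<rparr>"

section \<open>The length homomorphism phi : F_n -> <t> = Z (exponent sum)\<close>

fun letter_exp :: "letter \<Rightarrow> int" where
  "letter_exp (b, i) = (if b then 1 else -1)"

definition exp_sum :: "word \<Rightarrow> int" where
  "exp_sum w = sum_list (map letter_exp w)"

definition ker_phi :: "nat \<Rightarrow> word set" where
  "ker_phi n = {w \<in> carrier (free_group n). exp_sum w = 0}"

section \<open>Laurent polynomials Z[t, t^-1] as the group ring Z[Z]\<close>

type_synonym laurent = "int \<Rightarrow>\<^sub>0 int"

definition tpow :: "int \<Rightarrow> laurent" where
  "tpow k = Poly_Mapping.single k 1"

text \<open>fox_phi i w is (dw/d beta_i)^phi, computed by the Fox rules
  d(uv) = du + u dv,  d beta_j / d beta_i = delta_ij,  d beta_j^-1 / d beta_i = - delta_ij beta_j^-1,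
  and then applying the ring homomorphism Z[F_n] -> Z[t,t^-1] induced by phi.\<close>
fun fox_phi :: "nat \<Rightarrow> word \<Rightarrow> laurent" where
  "fox_phi i [] = 0"
| "fox_phi i ((b, j) # w) =
     (if j = i then (if b then 1 else - tpow (-1)) else 0)
     + tpow (letter_exp (b, j)) * fox_phi i w"

definition normal_closure :: "('a, 'b) monoid_scheme \<Rightarrow> 'a set \<Rightarrow> 'a set" where
  "normal_closure G S = generate G {g \<otimes>\<^bsub>G\<^esub> s \<otimes>\<^bsub>G\<^esub> inv\<^bsub>G\<^esub> g | g s. g \<in> carrier G \<and> s \<in> S}"

definition fox_module :: "nat \<Rightarrow> nat \<Rightarrow> (nat \<Rightarrow> word) \<Rightarrow> (nat \<Rightarrow> laurent) set" where
  "fox_module n \<nu> R =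
     {(\<lambda>i. if i < n then (\<Sum>j<\<nu>. c j * fox_phi i (R j)) else 0) | c. True}"

definition target_module :: "nat \<Rightarrow> (nat \<Rightarrow> laurent) set" where
  "target_module n =
     {(\<lambda>i. if i < n then (1 - tpow 1) * x i else 0) | x. (\<Sum>i<n. x i) = 0}"

end

theory Submission
  imports Defs
begin


lemma reduced_tl: "reduced (b # w) \<Longrightarrow> reduced w"
  by (cases w) auto

lemma inv_inv_letter[simp]: "inv_letter (inv_letter a) = a"
  by (cases a) auto

lemma reduced_cancel1: "reduced w \<Longrightarrow> reduced (cancel1 a w)"
  by (cases w) (auto dest: reduced_tl)

lemma reduce_Nil[simp]: "reduce [] = []" by (simp add: reduce_def)
lemma reduce_Cons: "reduce (a # w) = cancel1 a (reduce w)" by (simp add: reduce_def)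

lemma reduced_reduce: "reduced (reduce w)"
  by (induction w) (auto simp: reduce_Cons reduced_cancel1)

lemma reduce_reduced: "reduced w \<Longrightarrow> reduce w = w"
proof (induction w)
  case (Cons a w)
  then have "reduce w = w" using reduced_tl by blast
  then show ?case using Cons.prems by (cases w) (auto simp: reduce_Cons)
qed simp

lemma cancel_inv: "reduced x \<Longrightarrow> cancel1 a (cancel1 (inv_letter a) x) = x"
proof (cases x)
  case (Cons b w)
  assume r: "reduced x"
  show ?thesis
  proof (cases "b = a")
    case True
    then have "cancel1 (inv_letter a) x = w" using Cons by simp
    moreover have "cancel1 a w = a # w" using r Cons True by (cases w) auto
    ultimately show ?thesis using Cons True by simp
  next
    case False
    then show ?thesis using Cons by auto
  qed
qed simp

lemma reduce_append: "reduce (u @ v) = foldr cancel1 u (reduce v)"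
  by (simp add: reduce_def)

lemma reduce_append_reduce_right: "reduce (u @ reduce v) = reduce (u @ v)"
  by (simp add: reduce_append reduce_reduced reduced_reduce)

lemma reduce_cancel1_append:
  assumes "reduced r" shows "reduce (cancel1 a r @ v) = cancel1 a (reduce (r @ v))"
proof (cases r)
  case Nil then show ?thesis by (simp add: reduce_Cons)
next
  case (Cons b r')
  show ?thesis
  proof (cases "b = inv_letter a")
    case True
    have "cancel1 a (reduce (r @ v)) = cancel1 a (cancel1 (inv_letter a) (reduce (r' @ v)))"
      using Cons True by (simp add: reduce_Cons)
    also have "\<dots> = reduce (r' @ v)" by (rule cancel_inv[OF reduced_reduce])
    finally show ?thesis using Cons True by simp
  next
    case False
    then show ?thesis using Cons by (simp add: reduce_Cons)
  qed
qed

lemma reduce_append_reduce_left: "reduce (reduce u @ v) = reduce (u @ v)"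
proof (induction u arbitrary: v)
  case (Cons a u)
  have "reduce (reduce (a # u) @ v) = reduce (cancel1 a (reduce u) @ v)" by (simp add: reduce_Cons)
  also have "\<dots> = cancel1 a (reduce (reduce u @ v))" by (rule reduce_cancel1_append[OF reduced_reduce])
  also have "\<dots> = reduce ((a # u) @ v)" using Cons by (simp add: reduce_Cons)
  finally show ?case .
qed simp

lemma set_cancel1: "set (cancel1 a x) \<subseteq> insert a (set x)"
  by (cases x) auto

lemma set_reduce: "set (reduce w) \<subseteq> set w"
  by (induction w) (use set_cancel1 in \<open>fastforce simp: reduce_Cons\<close>)+

definition winv :: "word \<Rightarrow> word" where "winv w = rev (map inv_letter w)"

lemma reduce_winv: "reduce (winv w @ w) = []"
proof (induction w)
  case (Cons a w)
  have "reduce (winv (a # w) @ a # w) = foldr cancel1 (winv w) (cancel1 (inv_letter a) (cancel1 a (reduce w)))"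
    by (simp add: winv_def reduce_append reduce_Cons)
  also have "\<dots> = foldr cancel1 (winv w) (reduce w)"
    using cancel_inv[OF reduced_reduce, of "inv_letter a" w] by simp
  also have "\<dots> = []" using Cons by (simp add: reduce_append)
  finally show ?case .
qed (simp add: winv_def)

lemma set_winv: "set (winv w) = inv_letter ` set w" by (simp add: winv_def)

lemma carrier_free_group: "carrier (free_group n) = {w. reduced w \<and> (\<forall>a \<in> set w. snd a < n)}"
  by (simp add: free_group_def)
lemma mult_free_group: "u \<otimes>\<^bsub>free_group n\<^esub> v = reduce (u @ v)"
  by (simp add: free_group_def)
lemma one_free_group: "\<one>\<^bsub>free_group n\<^esub> = []"
  by (simp add: free_group_def)

lemma group_free_group: "group (free_group n)"
proof (rule groupI)
  fix x y assume "x \<in> carrier (free_group n)" "y \<in> carrier (free_group n)"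
  then show "x \<otimes>\<^bsub>free_group n\<^esub> y \<in> carrier (free_group n)"
    using set_reduce[of "x @ y"] by (auto simp: carrier_free_group mult_free_group reduced_reduce)
next
  show "\<one>\<^bsub>free_group n\<^esub> \<in> carrier (free_group n)"
    by (simp add: carrier_free_group one_free_group)
next
  fix x y z
  show "x \<otimes>\<^bsub>free_group n\<^esub> y \<otimes>\<^bsub>free_group n\<^esub> z = x \<otimes>\<^bsub>free_group n\<^esub> (y \<otimes>\<^bsub>free_group n\<^esub> z)"
    by (simp add: mult_free_group reduce_append_reduce_left reduce_append_reduce_right)
next
  fix x assume "x \<in> carrier (free_group n)"
  then show "\<one>\<^bsub>free_group n\<^esub> \<otimes>\<^bsub>free_group n\<^esub> x = x"
    by (simp add: carrier_free_group mult_free_group one_free_group reduce_reduced)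
next
  fix x assume x: "x \<in> carrier (free_group n)"
  show "\<exists>y\<in>carrier (free_group n). y \<otimes>\<^bsub>free_group n\<^esub> x = \<one>\<^bsub>free_group n\<^esub>"
  proof (intro bexI)
    show "reduce (winv x) \<otimes>\<^bsub>free_group n\<^esub> x = \<one>\<^bsub>free_group n\<^esub>"
      by (simp add: mult_free_group one_free_group reduce_append_reduce_left reduce_winv)
    show "reduce (winv x) \<in> carrier (free_group n)"
      using x set_reduce[of "winv x"] by (fastforce simp: carrier_free_group reduced_reduce set_winv)
  qed
qed




lemma tpow_add: "tpow (a + b) = tpow a * tpow b"
  by (simp add: tpow_def mult_single)
lemma tpow_0[simp]: "tpow 0 = 1"
  by (simp add: tpow_def)

lemma exp_sum_Nil[simp]: "exp_sum [] = 0" by (simp add: exp_sum_def)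
lemma exp_sum_Cons[simp]: "exp_sum (a # w) = letter_exp a + exp_sum w" by (simp add: exp_sum_def)
lemma exp_sum_append: "exp_sum (u @ v) = exp_sum u + exp_sum v" by (simp add: exp_sum_def)

lemma letter_exp_inv[simp]: "letter_exp (inv_letter a) = - letter_exp a"
  by (cases a) auto

lemma fox_append: "fox_phi i (u @ v) = fox_phi i u + tpow (exp_sum u) * fox_phi i v"
  by (induction u) (auto simp: algebra_simps tpow_add)

lemma fox_pair: "fox_phi i (a # inv_letter a # x) = fox_phi i x"
proof -
  obtain b j where a: "a = (b, j)" by (cases a)
  show ?thesis
    by (cases b) (auto simp: a algebra_simps tpow_add[symmetric])
qed

lemma exp_sum_cancel1: "exp_sum (cancel1 a x) = exp_sum (a # x)"
  by (cases x) auto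

lemma fox_cancel1: "fox_phi i (cancel1 a x) = fox_phi i (a # x)"
proof (cases x)
  case (Cons b w)
  then show ?thesis
  proof (cases "b = inv_letter a")
    case True then show ?thesis using Cons fox_pair[of i a w] by simp
  qed simp
qed simp

lemma exp_sum_reduce: "exp_sum (reduce w) = exp_sum w"
  by (induction w) (auto simp: reduce_Cons exp_sum_cancel1)

lemma fox_reduce: "fox_phi i (reduce w) = fox_phi i w"
proof (induction w)
  case (Cons a w)
  then show ?case by (cases a) (simp add: reduce_Cons fox_cancel1)
qed simp

section \<open>geometric series\<close>

definition geo :: "int \<Rightarrow> laurent" where
  "geo k = (if 0 \<le> k then (\<Sum>m<nat k. tpow (int m)) else - (\<Sum>m<nat (-k). tpow (- int m - 1)))"

lemma one_minus_t_ne0: "(1 - tpow 1 :: laurent) \<noteq> 0"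
proof
  assume h: "(1 - tpow 1 :: laurent) = 0"
  have l1: "Poly_Mapping.lookup (tpow 1) 0 = (0::int)" by (simp add: tpow_def lookup_single when_def)
  have "Poly_Mapping.lookup (1 - tpow 1 :: laurent) 0 = 1"
    by (simp only: lookup_minus l1) (simp add: lookup_one)
  then show False using h by simp
qed

lemma geo_pos: "(1 - tpow 1) * (\<Sum>m<N. tpow (int m)) = 1 - tpow (int N)"
proof (induction N)
  case (Suc N)
  have "(1 - tpow 1) * (\<Sum>m<Suc N. tpow (int m)) = (1 - tpow 1) * (\<Sum>m<N. tpow (int m)) + (1 - tpow 1) * tpow (int N)"
    by (simp add: algebra_simps)
  also have "\<dots> = 1 - tpow (int N) + (1 - tpow 1) * tpow (int N)"
    by (simp only: Suc)
  also have "\<dots> = 1 - tpow (int (Suc N))"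
  proof -
    have "tpow (int (Suc N)) = tpow 1 * tpow (int N)" by (simp add: tpow_add[symmetric] add.commute)
    then show ?thesis by (simp add: algebra_simps)
  qed
  finally show ?case .
qed simp

lemma geo_neg: "- ((1 - tpow 1) * (\<Sum>m<N. tpow (- int m - 1))) = 1 - tpow (- int N)"
proof (induction N)
  case (Suc N)
  have "- ((1 - tpow 1) * (\<Sum>m<Suc N. tpow (- int m - 1))) = - ((1 - tpow 1) * (\<Sum>m<N. tpow (- int m - 1))) - (1 - tpow 1) * tpow (- int N - 1)"
    by (simp add: algebra_simps)
  also have "\<dots> = 1 - tpow (- int N) - (1 - tpow 1) * tpow (- int N - 1)"
    by (simp only: Suc)
  also have "\<dots> = 1 - tpow (- int (Suc N))"
  proof -
    have e1: "tpow (- int N) = tpow 1 * tpow (- int N - 1)" by (simp add: tpow_add[symmetric])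
    have e2: "tpow (- int (Suc N)) = tpow (- int N - 1)" by (rule arg_cong[where f=tpow], simp)
    show ?thesis unfolding e1 e2 by (simp add: algebra_simps)
  qed
  finally show ?case .
qed simp

lemma geo_eq: "(1 - tpow 1) * geo k = 1 - tpow k"
proof (cases "0 \<le> k")
  case True then show ?thesis using geo_pos[of "nat k"] by (simp add: geo_def)
next
  case False then show ?thesis using geo_neg[of "nat (-k)"] by (simp add: geo_def)
qed

lemma geo_unique: "(1 - tpow 1) * x = 1 - tpow k \<Longrightarrow> x = geo k"
  using geo_eq[of k] one_minus_t_ne0 by (metis mult_left_cancel)

lemma geo_add: "geo (a + b) = geo a + tpow a * geo b"
proof (rule sym, rule geo_unique)
  have "(1 - tpow 1) * (geo a + tpow a * geo b) = (1 - tpow 1) * geo a + tpow a * ((1 - tpow 1) * geo b)"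
    by (simp add: algebra_simps)
  also have "\<dots> = 1 - tpow (a + b)" by (simp only: geo_eq) (simp add: algebra_simps tpow_add)
  finally show "(1 - tpow 1) * (geo a + tpow a * geo b) = 1 - tpow (a + b)" .
qed

lemma geo_1: "geo 1 = 1" by (rule sym, rule geo_unique) simp
lemma geo_m1: "geo (-1) = - tpow (-1)"
  by (rule sym, rule geo_unique) (simp add: algebra_simps tpow_add[symmetric])

lemma sum_fox: "\<forall>a\<in>set w. snd a < n \<Longrightarrow> (\<Sum>i<n. fox_phi i w) = geo (exp_sum w)"
proof (induction w)
  case Nil
  have "geo 0 = 0" by (rule sym, rule geo_unique) simp
  then show ?case by simp
next
  case (Cons a w)
  obtain b j where a: "a = (b, j)" by (cases a)
  have j: "j < n" using Cons.prems a by auto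
  have "(\<Sum>i<n. fox_phi i (a # w)) = (\<Sum>i<n. (if j = i then (if b then 1 else - tpow (-1)) else 0))
        + tpow (letter_exp a) * (\<Sum>i<n. fox_phi i w)"
    by (simp add: a sum.distrib sum_distrib_left)
  also have "\<dots> = (if b then 1 else - tpow (-1)) + tpow (letter_exp a) * geo (exp_sum w)"
    using j Cons by simp
  also have "\<dots> = geo (exp_sum (a # w))"
    using geo_add[of 1 "exp_sum w"] geo_add[of "-1" "exp_sum w"]
    by (cases b) (simp_all add: a geo_1 geo_m1)
  finally show ?case .
qed




lemma tpow_cancel: "tpow a * tpow (- a) = 1"
  by (simp add: tpow_add[symmetric])

locale FG = fixes n :: nat
begin

abbreviation F where "F \<equiv> free_group n"

sublocale G: group "free_group n" by (rule group_free_group)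

lemma es_mult: "exp_sum (u \<otimes>\<^bsub>F\<^esub> v) = exp_sum u + exp_sum v"
  by (simp add: mult_free_group exp_sum_reduce exp_sum_append)

lemma fox_mult: "fox_phi i (u \<otimes>\<^bsub>F\<^esub> v) = fox_phi i u + tpow (exp_sum u) * fox_phi i v"
  by (simp add: mult_free_group fox_reduce fox_append)

lemma es_one[simp]: "exp_sum \<one>\<^bsub>F\<^esub> = 0" by (simp add: one_free_group)
lemma fox_one[simp]: "fox_phi i \<one>\<^bsub>F\<^esub> = 0" by (simp add: one_free_group)

lemma es_inv: assumes "u \<in> carrier F" shows "exp_sum (inv\<^bsub>F\<^esub> u) = - exp_sum u"
proof -
  have "exp_sum (inv\<^bsub>F\<^esub> u \<otimes>\<^bsub>F\<^esub> u) = 0" using assms by simp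
  then show ?thesis by (simp add: es_mult)
qed

lemma fox_inv: assumes "u \<in> carrier F"
  shows "fox_phi i (inv\<^bsub>F\<^esub> u) = - (tpow (- exp_sum u) * fox_phi i u)"
proof -
  have "fox_phi i (inv\<^bsub>F\<^esub> u \<otimes>\<^bsub>F\<^esub> u) = 0" using assms by simp
  moreover have "fox_phi i (inv\<^bsub>F\<^esub> u \<otimes>\<^bsub>F\<^esub> u) = fox_phi i (inv\<^bsub>F\<^esub> u) + tpow (exp_sum (inv\<^bsub>F\<^esub> u)) * fox_phi i u"
    by (rule fox_mult)
  ultimately have h: "fox_phi i (inv\<^bsub>F\<^esub> u) + tpow (- exp_sum u) * fox_phi i u = 0"
    by (simp add: es_inv assms)
  show ?thesis unfolding eq_neg_iff_add_eq_0 by (rule h)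
qed

lemma es_comm: assumes "a \<in> carrier F" "b \<in> carrier F"
  shows "exp_sum (a \<otimes>\<^bsub>F\<^esub> b \<otimes>\<^bsub>F\<^esub> inv\<^bsub>F\<^esub> a \<otimes>\<^bsub>F\<^esub> inv\<^bsub>F\<^esub> b) = 0"
  using assms by (simp add: es_mult es_inv)

lemma fox_comm: assumes "a \<in> carrier F" "b \<in> carrier F"
  shows "fox_phi i (a \<otimes>\<^bsub>F\<^esub> b \<otimes>\<^bsub>F\<^esub> inv\<^bsub>F\<^esub> a \<otimes>\<^bsub>F\<^esub> inv\<^bsub>F\<^esub> b)
     = (1 - tpow (exp_sum b)) * fox_phi i a + (tpow (exp_sum a) - 1) * fox_phi i b"
proof -
  let ?A = "exp_sum a" and ?B = "exp_sum b" and ?fa = "fox_phi i a" and ?fb = "fox_phi i b"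
  have ia: "exp_sum (inv\<^bsub>F\<^esub> a) = - ?A" and ib: "exp_sum (inv\<^bsub>F\<^esub> b) = - ?B"
    using assms by (simp_all add: es_inv)
  have fa: "fox_phi i (inv\<^bsub>F\<^esub> a) = - (tpow (- ?A) * ?fa)" and fb: "fox_phi i (inv\<^bsub>F\<^esub> b) = - (tpow (- ?B) * ?fb)"
    using assms by (simp_all add: fox_inv)
  have "fox_phi i (a \<otimes>\<^bsub>F\<^esub> b \<otimes>\<^bsub>F\<^esub> inv\<^bsub>F\<^esub> a \<otimes>\<^bsub>F\<^esub> inv\<^bsub>F\<^esub> b)
     = ?fa + tpow ?A * ?fb + tpow (?A + ?B) * fox_phi i (inv\<^bsub>F\<^esub> a) + tpow (?A + ?B + exp_sum (inv\<^bsub>F\<^esub> a)) * fox_phi i (inv\<^bsub>F\<^esub> b)"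
    by (simp only: fox_mult es_mult)
  also have "\<dots> = ?fa + tpow ?A * ?fb - (tpow (?A + ?B) * tpow (- ?A)) * ?fa - (tpow ?B * tpow (- ?B)) * ?fb"
    unfolding ia fa fb by (simp add: algebra_simps)
  also have "tpow (?A + ?B) * tpow (- ?A) = tpow ?B" by (simp add: tpow_add[symmetric])
  also have "tpow ?B * tpow (- ?B) = 1" by (rule tpow_cancel)
  finally show ?thesis by (simp add: algebra_simps)
qed

lemma fox_conj: assumes "g \<in> carrier F" "r \<in> carrier F" "exp_sum r = 0"
  shows "fox_phi i (g \<otimes>\<^bsub>F\<^esub> r \<otimes>\<^bsub>F\<^esub> inv\<^bsub>F\<^esub> g) = tpow (exp_sum g) * fox_phi i r"
proof -
  have "fox_phi i (g \<otimes>\<^bsub>F\<^esub> r \<otimes>\<^bsub>F\<^esub> inv\<^bsub>F\<^esub> g) = fox_phi i g + tpow (exp_sum g) * fox_phi i r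
        + tpow (exp_sum g + exp_sum r) * fox_phi i (inv\<^bsub>F\<^esub> g)"
    by (simp only: fox_mult es_mult)
  also have "\<dots> = fox_phi i g + tpow (exp_sum g) * fox_phi i r - (tpow (exp_sum g) * tpow (- exp_sum g)) * fox_phi i g"
    using assms by (simp add: fox_inv)
  also have "tpow (exp_sum g) * tpow (- exp_sum g) = 1" by (rule tpow_cancel)
  finally show ?thesis by simp
qed

lemma es_conj: assumes "g \<in> carrier F" "r \<in> carrier F" "exp_sum r = 0"
  shows "exp_sum (g \<otimes>\<^bsub>F\<^esub> r \<otimes>\<^bsub>F\<^esub> inv\<^bsub>F\<^esub> g) = 0"
  using assms by (simp add: es_mult es_inv)

lemma es_nat_pow: "x \<in> carrier F \<Longrightarrow> exp_sum (x [^]\<^bsub>F\<^esub> (m::nat)) = int m * exp_sum x"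
proof (induction m)
  case (Suc m)
  have "exp_sum (x [^]\<^bsub>F\<^esub> Suc m) = exp_sum (x [^]\<^bsub>F\<^esub> m) + exp_sum x"
    by (simp only: G.nat_pow_Suc es_mult)
  then show ?case using Suc by (simp add: distrib_right)
qed simp

lemma es_int_pow: assumes x: "x \<in> carrier F" shows "exp_sum (x [^]\<^bsub>F\<^esub> (k::int)) = k * exp_sum x"
proof (cases "k < 0")
  case True
  then have e: "x [^]\<^bsub>F\<^esub> k = inv\<^bsub>F\<^esub> (x [^]\<^bsub>F\<^esub> nat (- k))" unfolding int_pow_def2 by simp
  have "exp_sum (inv\<^bsub>F\<^esub> (x [^]\<^bsub>F\<^esub> nat (- k))) = - (int (nat (-k)) * exp_sum x)"
    by (subst es_inv) (auto simp: x es_nat_pow)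
  then show ?thesis using True unfolding e by simp
next
  case False
  then have e: "x [^]\<^bsub>F\<^esub> k = x [^]\<^bsub>F\<^esub> nat k" unfolding int_pow_def2 by simp
  have "exp_sum (x [^]\<^bsub>F\<^esub> nat k) = int (nat k) * exp_sum x" by (rule es_nat_pow[OF x])
  then show ?thesis using False unfolding e by simp
qed

lemma nil_in: "[] \<in> carrier F" by (simp add: carrier_free_group)

lemma K_subgroup: "subgroup (ker_phi n) F"
  by (rule G.subgroupI) (auto simp: ker_phi_def es_mult es_inv nil_in intro: G.m_closed G.inv_closed intro!: exI[of _ "[]"])

lemma K_normal: "ker_phi n \<lhd> F"
  using K_subgroup by (auto simp: G.normal_inv_iff ker_phi_def es_conj)

lemma letter_in: "j < n \<Longrightarrow> [(b, j)] \<in> carrier F"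
  by (simp add: carrier_free_group)

lemma inv_letter_word: "j < n \<Longrightarrow> inv\<^bsub>F\<^esub> [(True, j)] = [(False, j)]"
  by (rule G.inv_equality) (auto simp: letter_in mult_free_group reduce_def one_free_group)

lemma reduce_Cons_mult: "reduce (a # w) = reduce [a] \<otimes>\<^bsub>F\<^esub> reduce w"
  by (simp add: mult_free_group reduce_append_reduce_left reduce_append_reduce_right)

end




definition lclosed :: "(nat \<Rightarrow> laurent) set \<Rightarrow> bool" where
  "lclosed S \<longleftrightarrow> (\<lambda>i. 0) \<in> S \<and> (\<forall>x\<in>S. \<forall>y\<in>S. (\<lambda>i. x i + y i) \<in> S)
     \<and> (\<forall>x\<in>S. (\<lambda>i. - x i) \<in> S) \<and> (\<forall>x\<in>S. \<forall>k. (\<lambda>i. tpow k * x i) \<in> S)"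

lemma lclosedI:
  assumes "(\<lambda>i. 0) \<in> S" "\<And>x y. x \<in> S \<Longrightarrow> y \<in> S \<Longrightarrow> (\<lambda>i. x i + y i) \<in> S"
    "\<And>x. x \<in> S \<Longrightarrow> (\<lambda>i. - x i) \<in> S" "\<And>x k. x \<in> S \<Longrightarrow> (\<lambda>i. tpow k * x i) \<in> S"
  shows "lclosed S"
  using assms by (auto simp: lclosed_def)

lemma lclosed_zero: "lclosed S \<Longrightarrow> (\<lambda>i. 0) \<in> S" by (simp add: lclosed_def)
lemma lclosed_add: "lclosed S \<Longrightarrow> x \<in> S \<Longrightarrow> y \<in> S \<Longrightarrow> (\<lambda>i. x i + y i) \<in> S" by (simp add: lclosed_def)
lemma lclosed_neg: "lclosed S \<Longrightarrow> x \<in> S \<Longrightarrow> (\<lambda>i. - x i) \<in> S" by (simp add: lclosed_def)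
lemma lclosed_tpow: "lclosed S \<Longrightarrow> x \<in> S \<Longrightarrow> (\<lambda>i. tpow k * x i) \<in> S" by (simp add: lclosed_def)

lemma lclosed_int:
  assumes S: "lclosed S" and x: "x \<in> S" shows "(\<lambda>i. of_int m * x i) \<in> S"
proof (induction m rule: int_induct[where k=0])
  case base then show ?case using lclosed_zero[OF S] by simp
next
  case (step1 i)
  have "(\<lambda>l. of_int (i + 1) * x l) = (\<lambda>l. of_int i * x l + x l)" by (simp add: algebra_simps)
  then show ?case using lclosed_add[OF S step1(2) x] by simp
next
  case (step2 i)
  have "(\<lambda>l. of_int (i - 1) * x l) = (\<lambda>l. of_int i * x l + - x l)" by (simp add: algebra_simps)
  then show ?case using lclosed_add[OF S step2(2) lclosed_neg[OF S x]] by simp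
qed

lemma of_int_laurent: "(of_int b :: laurent) = Poly_Mapping.single 0 b"
proof (cases "b \<ge> 0")
  case True
  then obtain m where "b = int m" by (metis nonneg_int_cases)
  then show ?thesis by simp
next
  case False
  then obtain m where "b = - int m" by (metis nonpos_int_cases linear)
  then show ?thesis by (simp add: single_uminus)
qed

lemma single_eq: "Poly_Mapping.single k (b::int) = of_int b * tpow k"
  by (simp add: of_int_laurent tpow_def mult_single)

lemma update_eq: "a \<notin> Poly_Mapping.keys f \<Longrightarrow> Poly_Mapping.update a b f = f + Poly_Mapping.single a b"
  by (rule poly_mapping_eqI) (auto simp: lookup_update lookup_add lookup_single when_def not_in_keys_iff_lookup_eq_zero)

lemma lclosed_smult:
  assumes S: "lclosed S" and x: "x \<in> S" shows "(\<lambda>i. (c::laurent) * x i) \<in> S"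
proof (induction c rule: Poly_Mapping.update_induct)
  case const then show ?case using lclosed_zero[OF S] by simp
next
  case (update f a b)
  have "(\<lambda>i. Poly_Mapping.update a b f * x i) = (\<lambda>i. f * x i + of_int b * (tpow a * x i))"
    by (simp add: update_eq[OF update(1)] single_eq algebra_simps)
  then show ?case
    using lclosed_add[OF S update(3) lclosed_int[OF S lclosed_tpow[OF S x]]] by simp
qed

lemma lclosed_sum:
  assumes S: "lclosed S" and "finite J" and "\<And>j. j \<in> J \<Longrightarrow> v j \<in> S"
  shows "(\<lambda>i. \<Sum>j\<in>J. v j i) \<in> S"
  using assms(2,3)
proof (induction J rule: finite_induct)
  case empty then show ?case using lclosed_zero[OF S] by simp
next
  case (insert j J)
  then show ?case using lclosed_add[OF S, of "v j" "\<lambda>i. \<Sum>j\<in>J. v j i"] by simp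
qed

lemma fox_module_sub:
  assumes S: "lclosed S" and R: "\<And>j. j < \<nu> \<Longrightarrow> (\<lambda>i. if i < n then fox_phi i (R j) else 0) \<in> S"
  shows "fox_module n \<nu> R \<subseteq> S"
proof
  fix x assume "x \<in> fox_module n \<nu> R"
  then obtain c where x: "x = (\<lambda>i. if i < n then (\<Sum>j<\<nu>. c j * fox_phi i (R j)) else 0)"
    by (auto simp: fox_module_def)
  have "x = (\<lambda>i. \<Sum>j<\<nu>. c j * (if i < n then fox_phi i (R j) else 0))"
    unfolding x by (auto simp: fun_eq_iff)
  also have "\<dots> \<in> S"
    by (rule lclosed_sum[OF S]) (auto intro: lclosed_smult[OF S] R)
  finally show "x \<in> S" .
qed

lemma fox_module_lclosed: "lclosed (fox_module n \<nu> R)"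
proof (rule lclosedI)
  show "(\<lambda>i. 0) \<in> fox_module n \<nu> R"
    by (auto simp: fox_module_def intro!: exI[of _ "\<lambda>j. 0"])
next
  fix x y assume "x \<in> fox_module n \<nu> R" "y \<in> fox_module n \<nu> R"
  then obtain c d where x: "x = (\<lambda>i. if i < n then (\<Sum>j<\<nu>. c j * fox_phi i (R j)) else 0)"
     and y: "y = (\<lambda>i. if i < n then (\<Sum>j<\<nu>. d j * fox_phi i (R j)) else 0)"
    by (auto simp: fox_module_def)
  show "(\<lambda>i. x i + y i) \<in> fox_module n \<nu> R"
    unfolding fox_module_def x y
    by (auto simp: fun_eq_iff sum.distrib algebra_simps intro!: exI[of _ "\<lambda>j. c j + d j"])
next
  fix x assume "x \<in> fox_module n \<nu> R"
  then obtain c where x: "x = (\<lambda>i. if i < n then (\<Sum>j<\<nu>. c j * fox_phi i (R j)) else 0)"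
    by (auto simp: fox_module_def)
  show "(\<lambda>i. - x i) \<in> fox_module n \<nu> R"
    unfolding fox_module_def x
    by (auto simp: fun_eq_iff sum_negf intro!: exI[of _ "\<lambda>j. - c j"])
next
  fix x k assume "x \<in> fox_module n \<nu> R"
  then obtain c where x: "x = (\<lambda>i. if i < n then (\<Sum>j<\<nu>. c j * fox_phi i (R j)) else 0)"
    by (auto simp: fox_module_def)
  show "(\<lambda>i. tpow k * x i) \<in> fox_module n \<nu> R"
    unfolding fox_module_def x
    by (auto simp: fun_eq_iff sum_distrib_left algebra_simps intro!: exI[of _ "\<lambda>j. tpow k * c j"])
qed

lemma fox_module_gen:
  assumes "j < \<nu>" shows "(\<lambda>i. if i < n then fox_phi i (R j) else 0) \<in> fox_module n \<nu> R"
proof -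
  have "(\<Sum>ja<\<nu>. (if ja = j then 1 else 0) * fox_phi i (R ja)) = (\<Sum>ja<\<nu>. if ja = j then fox_phi i (R ja) else 0)" for i
    by (rule sum.cong) auto
  then show ?thesis unfolding fox_module_def
    using assms by (auto simp: fun_eq_iff intro!: exI[of _ "\<lambda>j'. if j' = j then 1 else 0"])
qed

lemma target_iff: "x \<in> target_module n \<longleftrightarrow>
   (\<exists>y. (\<Sum>i<n. y i) = 0 \<and> x = (\<lambda>i. if i < n then (1 - tpow 1) * y i else 0))"
  by (auto simp: target_module_def)

lemma target_add: assumes "x \<in> target_module n" "y \<in> target_module n"
  shows "(\<lambda>i. x i + y i) \<in> target_module n"
proof -
  obtain u where u: "(\<Sum>i<n. u i) = 0" "x = (\<lambda>i. if i < n then (1 - tpow 1) * u i else 0)"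
    using assms(1) unfolding target_iff by blast
  obtain v where v: "(\<Sum>i<n. v i) = 0" "y = (\<lambda>i. if i < n then (1 - tpow 1) * v i else 0)"
    using assms(2) unfolding target_iff by blast
  show ?thesis unfolding target_iff
    by (rule exI[of _ "\<lambda>i. u i + v i"]) (simp add: u v sum.distrib fun_eq_iff algebra_simps)
qed

lemma target_neg: assumes "x \<in> target_module n" shows "(\<lambda>i. - x i) \<in> target_module n"
proof -
  obtain u where u: "(\<Sum>i<n. u i) = 0" "x = (\<lambda>i. if i < n then (1 - tpow 1) * u i else 0)"
    using assms(1) unfolding target_iff by blast
  show ?thesis unfolding target_iff
    by (rule exI[of _ "\<lambda>i. - u i"]) (simp add: u sum_negf fun_eq_iff)
qed

lemma target_zero: "(\<lambda>i. 0) \<in> target_module n"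
  unfolding target_iff by (auto intro!: exI[of _ "\<lambda>i. 0"])




context FG begin

definition fv where "fv w = (\<lambda>i. if i < n then fox_phi i w else 0)"

lemma fv_nil: "fv [] = (\<lambda>i. 0)" unfolding fv_def by (rule ext) simp

lemma fv_mult0: assumes "exp_sum a = 0" shows "fv (a \<otimes>\<^bsub>F\<^esub> b) = (\<lambda>i. fv a i + fv b i)"
  using assms by (simp add: fv_def fox_mult fun_eq_iff)

lemma fv_inv0: assumes "a \<in> carrier F" "exp_sum a = 0" shows "fv (inv\<^bsub>F\<^esub> a) = (\<lambda>i. - fv a i)"
  using assms by (simp add: fv_def fox_inv fun_eq_iff)

lemma fv_conj: assumes "g \<in> carrier F" "r \<in> carrier F" "exp_sum r = 0"
  shows "fv (g \<otimes>\<^bsub>F\<^esub> r \<otimes>\<^bsub>F\<^esub> inv\<^bsub>F\<^esub> g) = (\<lambda>i. tpow (exp_sum g) * fv r i)"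
  using assms by (simp add: fv_def fox_conj fun_eq_iff)

lemma fv_comm_target: assumes a: "a \<in> carrier F" and b: "b \<in> carrier F"
  shows "fv (a \<otimes>\<^bsub>F\<^esub> b \<otimes>\<^bsub>F\<^esub> inv\<^bsub>F\<^esub> a \<otimes>\<^bsub>F\<^esub> inv\<^bsub>F\<^esub> b) \<in> target_module n"
proof -
  let ?A = "exp_sum a" and ?B = "exp_sum b"
  define y where "y i = geo ?B * fox_phi i a - geo ?A * fox_phi i b" for i
  have sa: "(\<Sum>i<n. fox_phi i a) = geo ?A" using a by (intro sum_fox) (auto simp: carrier_free_group)
  have sb: "(\<Sum>i<n. fox_phi i b) = geo ?B" using b by (intro sum_fox) (auto simp: carrier_free_group)
  have "(\<Sum>i<n. y i) = geo ?B * (\<Sum>i<n. fox_phi i a) - geo ?A * (\<Sum>i<n. fox_phi i b)"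
    by (simp add: y_def sum_subtractf sum_distrib_left)
  also have "\<dots> = 0" by (simp add: sa sb)
  finally have s0: "(\<Sum>i<n. y i) = 0" .
  have "(1 - tpow 1) * y i = ((1 - tpow 1) * geo ?B) * fox_phi i a - ((1 - tpow 1) * geo ?A) * fox_phi i b" for i
    by (simp add: y_def algebra_simps)
  note h = this
  have yy: "(1 - tpow 1) * y i = (1 - tpow ?B) * fox_phi i a + (tpow ?A - 1) * fox_phi i b" for i
    using h[of i] unfolding geo_eq by (simp add: algebra_simps)
  show ?thesis unfolding target_iff
    by (rule exI[of _ y]) (simp add: s0 fv_def fox_comm[OF a b] yy fun_eq_iff)
qed

lemma F'_props: assumes "w \<in> derived F (carrier F)"
  shows "w \<in> ker_phi n \<and> fv w \<in> target_module n"
proof -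
  define T where "T = {w \<in> ker_phi n. fv w \<in> target_module n}"
  have K: "x \<in> ker_phi n \<longleftrightarrow> x \<in> carrier F \<and> exp_sum x = 0" for x by (simp add: ker_phi_def)
  have "subgroup T F"
  proof (rule G.subgroupI)
    show "T \<subseteq> carrier F" by (auto simp: T_def K)
    show "T \<noteq> {}" proof -
      have "[] \<in> T" using target_zero[of n] nil_in fv_nil by (simp add: T_def K)
      then show ?thesis by blast
    qed
    fix a b assume a: "a \<in> T" and b: "b \<in> T"
    then show "a \<otimes>\<^bsub>F\<^esub> b \<in> T"
      by (auto simp: T_def K es_mult fv_mult0 target_add)
    show "inv\<^bsub>F\<^esub> a \<in> T" using a by (auto simp: T_def K es_inv fv_inv0 target_neg)
  qed
  moreover have "derived_set F (carrier F) \<subseteq> T"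
    by (auto simp: T_def K es_comm fv_comm_target)
  ultimately have "derived F (carrier F) \<subseteq> T"
    unfolding derived_def by (rule G.generate_subgroup_incl[rotated])
  then show ?thesis using assms by (auto simp: T_def)
qed

lemma K'_props: assumes "w \<in> derived F (ker_phi n)"
  shows "w \<in> ker_phi n \<and> fv w = (\<lambda>i. 0)"
proof -
  define T where "T = {w \<in> ker_phi n. fv w = (\<lambda>i. 0)}"
  have K: "x \<in> ker_phi n \<longleftrightarrow> x \<in> carrier F \<and> exp_sum x = 0" for x by (simp add: ker_phi_def)
  have "subgroup T F"
  proof (rule G.subgroupI)
    show "T \<subseteq> carrier F" by (auto simp: T_def K)
    show "T \<noteq> {}"
    proof -
      have "[] \<in> T" using nil_in fv_nil by (simp add: T_def K)
      then show ?thesis by blast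
    qed
    fix a b assume a: "a \<in> T" and b: "b \<in> T"
    then show "a \<otimes>\<^bsub>F\<^esub> b \<in> T"
      by (auto simp: T_def K es_mult fv_mult0)
    show "inv\<^bsub>F\<^esub> a \<in> T" using a by (auto simp: T_def K es_inv fv_inv0)
  qed
  moreover have "derived_set F (ker_phi n) \<subseteq> T"
    by (auto simp: T_def K es_comm fv_def fox_comm)
  ultimately have "derived F (ker_phi n) \<subseteq> T"
    unfolding derived_def by (rule G.generate_subgroup_incl[rotated])
  then show ?thesis using assms by (auto simp: T_def)
qed

end



context FG begin

lemma N_normal: assumes R: "\<And>j. j < \<nu> \<Longrightarrow> R j \<in> carrier F"
  shows "normal_closure F (R ` {..<\<nu>}) \<lhd> F"
  unfolding normal_closure_def
proof (rule G.normal_generateI)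
  show "{g \<otimes>\<^bsub>F\<^esub> s \<otimes>\<^bsub>F\<^esub> inv\<^bsub>F\<^esub> g |g s. g \<in> carrier F \<and> s \<in> R ` {..<\<nu>}} \<subseteq> carrier F"
    using R by auto
next
  fix h x assume h: "h \<in> {g \<otimes>\<^bsub>F\<^esub> s \<otimes>\<^bsub>F\<^esub> inv\<^bsub>F\<^esub> g |g s. g \<in> carrier F \<and> s \<in> R ` {..<\<nu>}}"
    and x: "x \<in> carrier F"
  then obtain g s where g: "g \<in> carrier F" and s: "s \<in> R ` {..<\<nu>}" and h: "h = g \<otimes>\<^bsub>F\<^esub> s \<otimes>\<^bsub>F\<^esub> inv\<^bsub>F\<^esub> g"
    by auto
  have sc: "s \<in> carrier F" using s R by auto
  have "x \<otimes>\<^bsub>F\<^esub> h \<otimes>\<^bsub>F\<^esub> inv\<^bsub>F\<^esub> x = (x \<otimes>\<^bsub>F\<^esub> g) \<otimes>\<^bsub>F\<^esub> s \<otimes>\<^bsub>F\<^esub> inv\<^bsub>F\<^esub> (x \<otimes>\<^bsub>F\<^esub> g)"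
    using g sc x by (simp add: h G.m_assoc G.inv_mult_group)
  then show "x \<otimes>\<^bsub>F\<^esub> h \<otimes>\<^bsub>F\<^esub> inv\<^bsub>F\<^esub> x \<in> {g \<otimes>\<^bsub>F\<^esub> s \<otimes>\<^bsub>F\<^esub> inv\<^bsub>F\<^esub> g |g s. g \<in> carrier F \<and> s \<in> R ` {..<\<nu>}}"
    using g x s by blast
qed

lemma N_props: assumes R: "\<And>j. j < \<nu> \<Longrightarrow> R j \<in> carrier F"
    and RD: "\<And>j. j < \<nu> \<Longrightarrow> R j \<in> derived F (carrier F)"
    and w: "w \<in> normal_closure F (R ` {..<\<nu>})"
  shows "w \<in> derived F (carrier F) \<and> w \<in> ker_phi n \<and> fv w \<in> fox_module n \<nu> R"
proof -
  let ?S = "{g \<otimes>\<^bsub>F\<^esub> s \<otimes>\<^bsub>F\<^esub> inv\<^bsub>F\<^esub> g |g s. g \<in> carrier F \<and> s \<in> R ` {..<\<nu>}}"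
  have K: "x \<in> ker_phi n \<longleftrightarrow> x \<in> carrier F \<and> exp_sum x = 0" for x by (simp add: ker_phi_def)
  interpret D: normal "derived F (carrier F)" F by (rule G.derived_self_is_normal)
  have "?S \<subseteq> derived F (carrier F)"
    using RD by (auto intro: D.inv_op_closed2)
  then have "normal_closure F (R ` {..<\<nu>}) \<subseteq> derived F (carrier F)"
    unfolding normal_closure_def by (rule G.generate_subgroup_incl) (rule D.subgroup_axioms)
  then have w1: "w \<in> derived F (carrier F)" using w by blast
  define T where "T = {w \<in> ker_phi n. fv w \<in> fox_module n \<nu> R}"
  note L = fox_module_lclosed[of n \<nu> R]
  have "subgroup T F"
  proof (rule G.subgroupI)
    show "T \<subseteq> carrier F" by (auto simp: T_def K)
    show "T \<noteq> {}"
    proof -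
      have "[] \<in> T" using lclosed_zero[OF L] nil_in fv_nil by (simp add: T_def K)
      then show ?thesis by blast
    qed
    fix a b assume a: "a \<in> T" and b: "b \<in> T"
    then show "a \<otimes>\<^bsub>F\<^esub> b \<in> T"
      by (auto simp: T_def K es_mult fv_mult0 lclosed_add[OF L])
    show "inv\<^bsub>F\<^esub> a \<in> T" using a by (auto simp: T_def K es_inv fv_inv0 lclosed_neg[OF L])
  qed
  moreover have "?S \<subseteq> T"
  proof
    fix h assume "h \<in> ?S"
    then obtain g j where g: "g \<in> carrier F" and j: "j < \<nu>" and h: "h = g \<otimes>\<^bsub>F\<^esub> R j \<otimes>\<^bsub>F\<^esub> inv\<^bsub>F\<^esub> g"
      by auto
    have e: "exp_sum (R j) = 0" using F'_props[OF RD[OF j]] by (simp add: K)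
    have "fv (R j) \<in> fox_module n \<nu> R" unfolding fv_def by (rule fox_module_gen[OF j])
    then show "h \<in> T" using g R[OF j] e
      by (simp add: T_def K h es_conj fv_conj lclosed_tpow[OF L])
  qed
  ultimately have "normal_closure F (R ` {..<\<nu>}) \<subseteq> T"
    unfolding normal_closure_def by (rule G.generate_subgroup_incl[rotated])
  then show ?thesis using w w1 by (auto simp: T_def)
qed

lemma b0_in: "0 < n \<Longrightarrow> [(True, 0)] \<in> carrier F" by (simp add: carrier_free_group)

lemma normal_fv_lclosed: assumes H: "H \<lhd> F" and HK: "H \<subseteq> ker_phi n"
  shows "lclosed (fv ` H)"
proof -
  interpret H: normal H F by (rule H)
  have K: "x \<in> H \<Longrightarrow> x \<in> carrier F \<and> exp_sum x = 0" for x using HK by (auto simp: ker_phi_def)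
  show ?thesis
  proof (rule lclosedI)
    show "(\<lambda>i. 0) \<in> fv ` H" using H.one_closed fv_nil by (metis image_eqI one_free_group)
  next
    fix x y assume "x \<in> fv ` H" "y \<in> fv ` H"
    then obtain a b where a: "a \<in> H" "x = fv a" and b: "b \<in> H" "y = fv b" by auto
    have "(\<lambda>i. x i + y i) = fv (a \<otimes>\<^bsub>F\<^esub> b)" using K[OF a(1)] by (simp add: a b fv_mult0)
    then show "(\<lambda>i. x i + y i) \<in> fv ` H" using a b by blast
  next
    fix x assume "x \<in> fv ` H"
    then obtain a where a: "a \<in> H" "x = fv a" by auto
    have "(\<lambda>i. - x i) = fv (inv\<^bsub>F\<^esub> a)" using K[OF a(1)] by (simp add: a fv_inv0)
    then show "(\<lambda>i. - x i) \<in> fv ` H" using a by blast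
  next
    fix x k assume "x \<in> fv ` H"
    then obtain a where a: "a \<in> H" "x = fv a" by auto
    show "(\<lambda>i. tpow k * x i) \<in> fv ` H"
    proof (cases "n = 0")
      case True
      have "\<forall>w. fv w = (\<lambda>i. 0)" unfolding fv_def using True by auto
      then have "(\<lambda>i. tpow k * x i) = fv a" by (simp add: a)
      then show ?thesis using a by blast
    next
      case False
      define g where "g = [(True, 0)] [^]\<^bsub>F\<^esub> k"
      have g: "g \<in> carrier F" using b0_in False by (simp add: g_def)
      have eg: "exp_sum g = k" using b0_in False by (simp add: g_def es_int_pow)
      have "(\<lambda>i. tpow k * x i) = fv (g \<otimes>\<^bsub>F\<^esub> a \<otimes>\<^bsub>F\<^esub> inv\<^bsub>F\<^esub> g)"
        using K[OF a(1)] g by (simp add: a fv_conj eg)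
      moreover have "g \<otimes>\<^bsub>F\<^esub> a \<otimes>\<^bsub>F\<^esub> inv\<^bsub>F\<^esub> g \<in> H" using g a(1) by (rule H.inv_op_closed2)
      ultimately show ?thesis by blast
    qed
  qed
qed

lemma fv_letter: "j < n \<Longrightarrow> fv [(True, j)] = (\<lambda>l. if l < n then (if l = j then 1 else 0) else 0)"
  by (auto simp: fv_def fun_eq_iff)

lemma target_sub_F': "target_module n \<subseteq> fv ` derived F (carrier F)"
proof
  fix x assume "x \<in> target_module n"
  then obtain y where y0: "(\<Sum>i<n. y i) = 0" and x: "x = (\<lambda>i. if i < n then (1 - tpow 1) * y i else 0)"
    unfolding target_iff by blast
  interpret D: normal "derived F (carrier F)" F by (rule G.derived_self_is_normal)
  have L: "lclosed (fv ` derived F (carrier F))"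
    by (rule normal_fv_lclosed[OF G.derived_self_is_normal]) (use F'_props in blast)
  show "x \<in> fv ` derived F (carrier F)"
  proof (cases "n = 0")
    case True
    have "\<forall>w. fv w = (\<lambda>i. 0)" unfolding fv_def using True by auto
    then have "x = fv []" using True by (simp add: x)
    then show ?thesis using D.one_closed by (metis image_eqI one_free_group)
  next
    case False
    define u where "u i = (\<lambda>l. if l < n then (1 - tpow 1) * ((if l = 0 then 1 else 0) - (if l = i then 1 else 0)) else (0::laurent))" for i
    have u_in: "u i \<in> fv ` derived F (carrier F)" if i: "i < n" for i
    proof -
      let ?c = "[(True, 0)] \<otimes>\<^bsub>F\<^esub> [(True, i)] \<otimes>\<^bsub>F\<^esub> inv\<^bsub>F\<^esub> [(True, 0)] \<otimes>\<^bsub>F\<^esub> inv\<^bsub>F\<^esub> [(True, i)]"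
      have a: "[(True, 0)] \<in> carrier F" and b: "[(True, i)] \<in> carrier F" using False i by (simp_all add: carrier_free_group)
      have cin: "?c \<in> derived F (carrier F)"
        unfolding derived_def using a b by (intro generate.incl) blast
      have fl: "fox_phi l [(True, j)] = (if j = l then 1 else 0)" for l j by simp
      have el: "exp_sum [(True, j)] = 1" for j by simp
      have fc: "fox_phi l ?c = (1 - tpow 1) * (if 0 = l then 1 else 0) + (tpow 1 - 1) * (if i = l then 1 else 0)" for l
        using fox_comm[OF a b, of l] unfolding fl el .
      have fvc: "fv ?c = u i" unfolding fv_def u_def
      proof (rule ext)
        fix l show "(if l < n then fox_phi l ?c else 0) = (if l < n then (1 - tpow 1) * ((if l = 0 then 1 else 0) - (if l = i then 1 else 0)) else 0)"
          unfolding fc by (auto simp: algebra_simps)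
      qed
      show ?thesis using cin fvc by (metis image_eqI)
    qed
    have "x = (\<lambda>l. \<Sum>i\<in>{1..<n}. (- y i) * u i l)"
    proof (rule ext)
      fix l
      show "x l = (\<Sum>i\<in>{1..<n}. (- y i) * u i l)"
      proof (cases "l < n")
        case False then show ?thesis by (simp add: x u_def)
      next
        case True
        show ?thesis
        proof (cases "l = 0")
          case l0: True
          have s: "(\<Sum>i<n. y i) = y 0 + (\<Sum>i\<in>{1..<n}. y i)"
            using \<open>n \<noteq> 0\<close> by (simp add: lessThan_atLeast0 sum.atLeast_Suc_lessThan)
          have "(\<Sum>i\<in>{1..<n}. (- y i) * u i l) = (\<Sum>i\<in>{1..<n}. - ((1 - tpow 1) * y i))"
            by (rule sum.cong) (auto simp: u_def l0 \<open>n \<noteq> 0\<close>)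
          also have "\<dots> = - ((1 - tpow 1) * (\<Sum>i\<in>{1..<n}. y i))" by (simp add: sum_negf sum_distrib_left)
          also have "(\<Sum>i\<in>{1..<n}. y i) = - y 0" using s y0 by (simp add: eq_neg_iff_add_eq_0 add.commute)
          finally show ?thesis by (simp add: x l0 \<open>n \<noteq> 0\<close>)
        next
          case l0: False
          have "(\<Sum>i\<in>{1..<n}. (- y i) * u i l) = (\<Sum>i\<in>{1..<n}. if i = l then (1 - tpow 1) * y l else 0)"
            by (rule sum.cong) (auto simp: u_def l0 True)
          also have "\<dots> = (1 - tpow 1) * y l" using l0 True by (simp add: sum.delta')
          finally show ?thesis by (simp add: x True)
        qed
      qed
    qed
    also have "\<dots> \<in> fv ` derived F (carrier F)"
    proof (rule lclosed_sum[OF L])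
      fix i assume "i \<in> {1..<n}"
      then show "(\<lambda>l. (- y i) * u i l) \<in> fv ` derived F (carrier F)"
        by (intro lclosed_smult[OF L] u_in) auto
    qed simp
    finally show ?thesis .
  qed
qed

end



definition thi :: "('q, 'b) monoid_scheme \<Rightarrow> (int \<Rightarrow> 'q) \<Rightarrow> laurent \<Rightarrow> 'q" where
  "thi Q f c = finprod Q (\<lambda>k. f k [^]\<^bsub>Q\<^esub> Poly_Mapping.lookup c k) (Poly_Mapping.keys c)"

definition thv :: "('q, 'b) monoid_scheme \<Rightarrow> (nat \<Rightarrow> int \<Rightarrow> 'q) \<Rightarrow> nat set \<Rightarrow> (nat \<Rightarrow> laurent) \<Rightarrow> 'q" where
  "thv Q f I x = finprod Q (\<lambda>i. thi Q (f i) (x i)) I"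

context comm_group begin

lemma thi_superset:
  assumes f: "\<And>k. f k \<in> carrier G" and S: "finite S" "Poly_Mapping.keys c \<subseteq> S"
  shows "thi G f c = finprod G (\<lambda>k. f k [^] Poly_Mapping.lookup c k) S"
  unfolding thi_def
  by (rule finprod_mono_neutral_cong_left[OF S(1) S(2)])
     (auto simp: f not_in_keys_iff_lookup_eq_zero)

lemma thi_closed: assumes f: "\<And>k. f k \<in> carrier G" shows "thi G f c \<in> carrier G"
  unfolding thi_def by (rule finprod_closed) (auto simp: f)

lemma thi_add: assumes f: "\<And>k. f k \<in> carrier G"
  shows "thi G f (c + d) = thi G f c \<otimes> thi G f d"
proof -
  let ?S = "Poly_Mapping.keys c \<union> Poly_Mapping.keys d \<union> Poly_Mapping.keys (c + d)"
  have fin: "finite ?S" by simp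
  have ce: "thi G f c = finprod G (\<lambda>k. f k [^] Poly_Mapping.lookup c k) ?S"
    by (rule thi_superset[OF f fin]) auto
  have de: "thi G f d = finprod G (\<lambda>k. f k [^] Poly_Mapping.lookup d k) ?S"
    by (rule thi_superset[OF f fin]) auto
  have "thi G f (c + d) = finprod G (\<lambda>k. f k [^] Poly_Mapping.lookup (c + d) k) ?S"
    by (rule thi_superset[OF f fin]) auto
  also have "\<dots> = finprod G (\<lambda>k. f k [^] Poly_Mapping.lookup c k \<otimes> f k [^] Poly_Mapping.lookup d k) ?S"
    by (rule finprod_cong') (auto simp: f lookup_add int_pow_mult)
  also have "\<dots> = finprod G (\<lambda>k. f k [^] Poly_Mapping.lookup c k) ?S \<otimes> finprod G (\<lambda>k. f k [^] Poly_Mapping.lookup d k) ?S"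
    by (rule finprod_multf) (auto simp: f)
  also have "\<dots> = thi G f c \<otimes> thi G f d"
    by (simp only: ce de)
  finally show ?thesis .
qed

lemma thi_zero: "thi G f 0 = \<one>" by (simp add: thi_def)

lemma thi_neg: assumes f: "\<And>k. f k \<in> carrier G" shows "thi G f (- c) = inv (thi G f c)"
proof -
  have "thi G f c \<otimes> thi G f (- c) = \<one>" using thi_add[OF f, where c=c and d="-c"] by (simp add: thi_zero)
  then have "thi G f (- c) \<otimes> thi G f c = \<one>" using thi_closed[OF f] by (simp add: m_comm)
  then have "inv (thi G f c) = thi G f (- c)" by (rule inv_equality) (simp_all add: thi_closed f)
  then show ?thesis by simp
qed

lemma thi_tpow: assumes f: "\<And>k. f k \<in> carrier G" shows "thi G f (tpow k) = f k"
  using f by (simp add: thi_def tpow_def)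

lemma thv_add: assumes f: "\<And>i k. f i k \<in> carrier G"
  shows "thv G f I (\<lambda>i. x i + y i) = thv G f I x \<otimes> thv G f I y"
proof -
  have "\<And>i. thi G (f i) (x i + y i) = thi G (f i) (x i) \<otimes> thi G (f i) (y i)"
    by (rule thi_add) (rule f)
  then show ?thesis unfolding thv_def
    by (simp only:) (rule finprod_multf, auto simp: f thi_closed)
qed

lemma thv_zero: "thv G f I (\<lambda>i. 0) = \<one>"
  unfolding thv_def by (simp add: thi_zero)

lemma thv_cong: assumes f: "\<And>i k. f i k \<in> carrier G" and "\<And>i. i \<in> I \<Longrightarrow> x i = y i"
  shows "thv G f I x = thv G f I y"
  unfolding thv_def by (rule finprod_cong') (auto simp: assms thi_closed)

lemma thv_closed: assumes f: "\<And>i k. f i k \<in> carrier G" shows "thv G f I x \<in> carrier G"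
  unfolding thv_def by (rule finprod_closed) (auto simp: f thi_closed)

lemma thv_delta: assumes f: "\<And>i k. f i k \<in> carrier G" and I: "finite I"
  shows "thv G f I (\<lambda>i. if i = j then c else 0) = (if j \<in> I then thi G (f j) c else \<one>)"
proof (cases "j \<in> I")
  case True
  have "thv G f I (\<lambda>i. if i = j then c else 0) = (\<Otimes>i\<in>I. if j = i then thi G (f i) c else \<one>)"
    unfolding thv_def by (rule finprod_cong') (auto simp: thi_zero f thi_closed)
  also have "\<dots> = thi G (f j) c"
    by (rule finprod_singleton[OF True I]) (auto simp: f thi_closed)
  finally show ?thesis using True by simp
next
  case False
  have "thv G f I (\<lambda>i. if i = j then c else 0) = \<one>"
    unfolding thv_def by (rule finprod_one_eqI) (use False in \<open>auto simp: thi_zero\<close>)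
  then show ?thesis using False by simp
qed

end




context FG begin

lemma reduce_in: "\<forall>a\<in>set w. snd a < n \<Longrightarrow> reduce w \<in> carrier F"
  using set_reduce[of w] by (auto simp: carrier_free_group reduced_reduce)

lemma core:
  assumes w: "w \<in> ker_phi n" and z: "\<And>i. i < n \<Longrightarrow> fox_phi i w = 0"
  shows "w \<in> derived F (ker_phi n)"
proof (cases "n = 0")
  case True
  have "w = []" using w True by (cases w) (auto simp: ker_phi_def carrier_free_group)
  moreover have "subgroup (derived F (ker_phi n)) F"
    by (rule G.derived_is_subgroup) (auto simp: ker_phi_def)
  ultimately show ?thesis by (metis one_free_group subgroup.one_closed)
next
  case False
  let ?K = "ker_phi n"
  let ?K' = "derived F ?K"
  define Kg where "Kg = F\<lparr>carrier := ?K\<rparr>"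
  define Q where "Q = Kg Mod ?K'"
  have Ksub: "subgroup ?K F" by (rule K_subgroup)
  have Kmem: "x \<in> ?K \<longleftrightarrow> x \<in> carrier F \<and> exp_sum x = 0" for x by (simp add: ker_phi_def)
  interpret Kgrp: group Kg unfolding Kg_def by (rule G.subgroup_imp_group[OF Ksub])
  interpret KN: normal ?K' Kg unfolding Kg_def by (rule G.derived_subgroup_is_normal[OF Ksub])
  interpret Qc: comm_group Q unfolding Q_def Kg_def by (rule G.derived_quot_of_subgroup_is_comm_group[OF Ksub])
  define pi where "pi a = ?K' #>\<^bsub>Kg\<^esub> a" for a
  interpret pi: group_hom Kg Q pi
    unfolding group_hom_def group_hom_axioms_def
    using Kgrp.is_group Qc.is_group KN.r_coset_hom_Mod unfolding pi_def Q_def by blast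
  have carrKg: "carrier Kg = ?K" by (simp add: Kg_def)
  have multKg: "x \<otimes>\<^bsub>Kg\<^esub> y = x \<otimes>\<^bsub>F\<^esub> y" for x y by (simp add: Kg_def)
  have invKg: "x \<in> ?K \<Longrightarrow> inv\<^bsub>Kg\<^esub> x = inv\<^bsub>F\<^esub> x" for x unfolding Kg_def by (rule G.m_inv_consistent[OF Ksub])
  have pi_mult: "x \<in> ?K \<Longrightarrow> y \<in> ?K \<Longrightarrow> pi (x \<otimes>\<^bsub>F\<^esub> y) = pi x \<otimes>\<^bsub>Q\<^esub> pi y" for x y
    using pi.hom_mult[of x y] by (simp add: carrKg multKg)
  have pi_inv: "x \<in> ?K \<Longrightarrow> pi (inv\<^bsub>F\<^esub> x) = inv\<^bsub>Q\<^esub> pi x" for x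
    using pi.hom_inv[of x] by (simp add: carrKg invKg)
  have pi_closed: "x \<in> ?K \<Longrightarrow> pi x \<in> carrier Q" for x
    using pi.hom_closed[of x] by (simp add: carrKg)
  have pi_one: "pi \<one>\<^bsub>F\<^esub> = \<one>\<^bsub>Q\<^esub>" using pi.hom_one by (simp add: Kg_def)
  define b0 where "b0 = [(True, 0::nat)]"
  have b0: "b0 \<in> carrier F" using False by (simp add: b0_def carrier_free_group)
  define P where "P k = b0 [^]\<^bsub>F\<^esub> (k::int)" for k
  have P: "P k \<in> carrier F" for k using b0 by (simp add: P_def)
  have eP: "exp_sum (P k) = k" for k using b0 by (simp add: P_def es_int_pow b0_def)
  have Padd: "P (k + l) = P k \<otimes>\<^bsub>F\<^esub> P l" for k l using b0 by (simp add: P_def G.int_pow_mult)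
  define aa where "aa i k = P k \<otimes>\<^bsub>F\<^esub> [(True, i)] \<otimes>\<^bsub>F\<^esub> inv\<^bsub>F\<^esub> P (k + 1)" for i k
  have aaK: "i < n \<Longrightarrow> aa i k \<in> ?K" for i k
    using P letter_in[of i True] by (simp add: aa_def Kmem es_mult es_inv eP)
  define ff where "ff i k = (if i < n then pi (aa i k) else \<one>\<^bsub>Q\<^esub>)" for i k
  have ff: "ff i k \<in> carrier Q" for i k by (simp add: ff_def pi_closed aaK)
  define I where "I = {1..<n}"
  have finI: "finite I" by (simp add: I_def)
  define elem where "elem s v = P s \<otimes>\<^bsub>F\<^esub> reduce v \<otimes>\<^bsub>F\<^esub> inv\<^bsub>F\<^esub> P (s + exp_sum v)" for s v
  have elemK: "\<forall>a\<in>set v. snd a < n \<Longrightarrow> elem s v \<in> ?K" for s v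
    using P reduce_in[of v] by (simp add: elem_def Kmem es_mult es_inv eP exp_sum_reduce)
  have claim: "\<forall>a\<in>set v. snd a < n \<Longrightarrow> thv Q ff I (\<lambda>i. tpow s * fox_phi i v) = pi (elem s v)" for v s
  proof (induction v arbitrary: s)
    case Nil
    have "elem s [] = P s \<otimes>\<^bsub>F\<^esub> \<one>\<^bsub>F\<^esub> \<otimes>\<^bsub>F\<^esub> inv\<^bsub>F\<^esub> P s"
      by (simp add: elem_def one_free_group)
    also have "\<dots> = \<one>\<^bsub>F\<^esub>" using P by simp
    finally have "elem s [] = \<one>\<^bsub>F\<^esub>" .
    then show ?case by (simp add: Qc.thv_zero pi_one)
  next
    case (Cons a v)
    obtain b j where a: "a = (b, j)" by (cases a)
    have j: "j < n" and vn: "\<forall>a\<in>set v. snd a < n" using Cons.prems a by auto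
    define e where "e = letter_exp (b, j)"
    define c where "c = (if b then 1 else - tpow (-1) :: laurent)"
    have vec: "(\<lambda>i. tpow s * fox_phi i (a # v)) = (\<lambda>i. (if i = j then tpow s * c else 0) + tpow (s + e) * fox_phi i v)"
      by (auto simp: a c_def e_def fun_eq_iff tpow_add algebra_simps)
    have "thv Q ff I (\<lambda>i. tpow s * fox_phi i (a # v)) = thv Q ff I (\<lambda>i. if i = j then tpow s * c else 0) \<otimes>\<^bsub>Q\<^esub> pi (elem (s + e) v)"
      unfolding vec by (simp add: Qc.thv_add[OF ff] Cons.IH[OF vn])
    also have "thv Q ff I (\<lambda>i. if i = j then tpow s * c else 0) = pi (P s \<otimes>\<^bsub>F\<^esub> [(b, j)] \<otimes>\<^bsub>F\<^esub> inv\<^bsub>F\<^esub> P (s + e))"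
    proof (cases "j = 0")
      case True
      have "[(b, j)] = P e"
      proof (cases b)
        case True then show ?thesis using b0 \<open>j = 0\<close> by (simp add: P_def e_def b0_def)
      next
        case bF: False
        have "P e = inv\<^bsub>F\<^esub> b0" using b0 bF by (simp add: P_def e_def G.int_pow_neg)
        then show ?thesis using bF \<open>j = 0\<close> False by (simp add: b0_def inv_letter_word)
      qed
      then have "P s \<otimes>\<^bsub>F\<^esub> [(b, j)] \<otimes>\<^bsub>F\<^esub> inv\<^bsub>F\<^esub> P (s + e) = \<one>\<^bsub>F\<^esub>"
        using P by (simp add: Padd)
      moreover have "j \<notin> I" using True by (simp add: I_def)
      ultimately show ?thesis by (simp add: Qc.thv_delta[OF ff finI] pi_one)
    next
      case jn0: False
      have jI: "j \<in> I" using jn0 j by (simp add: I_def)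
      show ?thesis
      proof (cases b)
        case True
        have A: "P s \<otimes>\<^bsub>F\<^esub> [(b, j)] \<otimes>\<^bsub>F\<^esub> inv\<^bsub>F\<^esub> P (s + e) = aa j s"
          by (simp add: aa_def True e_def)
        have "thv Q ff I (\<lambda>i. if i = j then tpow s * c else 0) = thi Q (ff j) (tpow s * c)"
          using jI by (simp add: Qc.thv_delta[OF ff finI])
        also have "thi Q (ff j) (tpow s * c) = thi Q (ff j) (tpow s)" by (simp add: c_def True)
        also have "thi Q (ff j) (tpow s) = ff j s" by (rule Qc.thi_tpow) (rule ff)
        also have "ff j s = pi (aa j s)" using j by (simp add: ff_def)
        finally show ?thesis using A by simp
      next
        case bF: False
        have A: "P s \<otimes>\<^bsub>F\<^esub> [(b, j)] \<otimes>\<^bsub>F\<^esub> inv\<^bsub>F\<^esub> P (s + e) = inv\<^bsub>F\<^esub> (aa j (s - 1))"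
          using P letter_in[OF j] j by (simp add: aa_def bF e_def G.inv_mult_group G.m_assoc inv_letter_word)
        have "thv Q ff I (\<lambda>i. if i = j then tpow s * c else 0) = thi Q (ff j) (tpow s * c)"
          using jI by (simp add: Qc.thv_delta[OF ff finI])
        also have "thi Q (ff j) (tpow s * c) = thi Q (ff j) (- tpow (s - 1))" by (simp add: c_def bF tpow_add[symmetric])
        also have "thi Q (ff j) (- tpow (s - 1)) = inv\<^bsub>Q\<^esub> (ff j (s - 1))"
          by (simp add: Qc.thi_neg Qc.thi_tpow ff)
        also have "ff j (s - 1) = pi (aa j (s - 1))" using j by (simp add: ff_def)
        finally show ?thesis using A aaK[OF j] by (simp add: pi_inv)
      qed
    qed
    also have "pi (P s \<otimes>\<^bsub>F\<^esub> [(b, j)] \<otimes>\<^bsub>F\<^esub> inv\<^bsub>F\<^esub> P (s + e)) \<otimes>\<^bsub>Q\<^esub> pi (elem (s + e) v)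
       = pi ((P s \<otimes>\<^bsub>F\<^esub> [(b, j)] \<otimes>\<^bsub>F\<^esub> inv\<^bsub>F\<^esub> P (s + e)) \<otimes>\<^bsub>F\<^esub> elem (s + e) v)"
      using P letter_in[OF j] elemK[OF vn]
      by (intro pi_mult[symmetric]) (simp_all add: Kmem es_mult es_inv eP e_def)
    also have "(P s \<otimes>\<^bsub>F\<^esub> [(b, j)] \<otimes>\<^bsub>F\<^esub> inv\<^bsub>F\<^esub> P (s + e)) \<otimes>\<^bsub>F\<^esub> elem (s + e) v = elem s (a # v)"
    proof -
      have r: "reduce (a # v) = [(b, j)] \<otimes>\<^bsub>F\<^esub> reduce v"
        using reduce_Cons_mult[of a v] by (simp add: a reduce_reduced)
      have es: "s + exp_sum (a # v) = s + e + exp_sum v" by (simp add: a e_def)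
      have cancel: "inv\<^bsub>F\<^esub> x \<otimes>\<^bsub>F\<^esub> (x \<otimes>\<^bsub>F\<^esub> y) = y" if "x \<in> carrier F" "y \<in> carrier F" for x y
        using that by (simp add: G.m_assoc[symmetric])
      show ?thesis unfolding elem_def r es
        using P letter_in[OF j] reduce_in[OF vn]
        by (simp add: G.m_assoc cancel)
    qed
    finally show ?case .
  qed
  have wc: "w \<in> carrier F" and w0: "exp_sum w = 0" using w by (auto simp: Kmem)
  have wr: "reduce w = w" using wc by (simp add: carrier_free_group reduce_reduced)
  have "thv Q ff I (\<lambda>i. tpow 0 * fox_phi i w) = pi (elem 0 w)"
    by (rule claim) (use wc in \<open>simp add: carrier_free_group\<close>)
  moreover have "elem 0 w = w" using wc by (simp add: elem_def wr w0 P_def)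
  moreover have "thv Q ff I (\<lambda>i. tpow 0 * fox_phi i w) = thv Q ff I (\<lambda>i. 0)"
    by (rule Qc.thv_cong[OF ff]) (simp add: I_def z)
  ultimately have "pi w = \<one>\<^bsub>Q\<^esub>" by (simp add: Qc.thv_zero)
  then have "?K' #>\<^bsub>Kg\<^esub> w = ?K'" by (simp add: pi_def Q_def)
  moreover have "w \<in> ?K' #>\<^bsub>Kg\<^esub> w"
    by (rule Kgrp.rcos_self) (simp_all add: carrKg w KN.subgroup_axioms)
  ultimately show ?thesis by simp
qed

end



lemma (in group) comm_quotI:
  assumes HN: "H \<lhd> G" and D: "derived G (carrier G) \<subseteq> H"
  shows "comm_group (G Mod H)"
proof (rule group.group_comm_groupI)
  interpret H: normal H G by (rule HN)
  show "group (G Mod H)" by (rule H.factorgroup_is_group)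
  fix XX YY assume "XX \<in> carrier (G Mod H)" "YY \<in> carrier (G Mod H)"
  then obtain g1 g2 where g1: "g1 \<in> carrier G" "XX = H #> g1" and g2: "g2 \<in> carrier G" "YY = H #> g2"
    unfolding FactGroup_def RCOSETS_def by auto
  have sub: "H #> (g1 \<otimes> g2) \<subseteq> H #> (g2 \<otimes> g1)" if g1: "g1 \<in> carrier G" and g2: "g2 \<in> carrier G" for g1 g2
  proof
    fix h assume "h \<in> H #> (g1 \<otimes> g2)"
    then obtain g' where h: "g' \<in> carrier G" "g' \<in> H" "h = g' \<otimes> (g1 \<otimes> g2)"
      using H.subset unfolding r_coset_def by auto
    have e: "inv g1 \<otimes> (inv g2 \<otimes> (g2 \<otimes> g1)) = \<one>"
      by (metis g1 g2 inv_closed l_inv l_one m_assoc)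
    have "h = (g' \<otimes> (g1 \<otimes> g2 \<otimes> inv g1 \<otimes> inv g2)) \<otimes> (g2 \<otimes> g1)"
      using g1 g2 h by (simp add: m_assoc e)
    moreover have "g1 \<otimes> g2 \<otimes> inv g1 \<otimes> inv g2 \<in> H"
      using D g1 g2 unfolding derived_def by (blast intro: generate.incl)
    hence "g' \<otimes> (g1 \<otimes> g2 \<otimes> inv g1 \<otimes> inv g2) \<in> H"
      using H.m_closed[OF h(2)] by simp
    ultimately show "h \<in> H #> (g2 \<otimes> g1)"
      unfolding r_coset_def by blast
  qed
  have "XX \<otimes>\<^bsub>G Mod H\<^esub> YY = H #> (g1 \<otimes> g2)" using g1 g2 by (simp add: FactGroup_def H.rcos_sum)
  also have "\<dots> = H #> (g2 \<otimes> g1)" using sub g1 g2 by blast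
  also have "\<dots> = YY \<otimes>\<^bsub>G Mod H\<^esub> XX" using g1 g2 by (simp add: FactGroup_def H.rcos_sum)
  finally show "XX \<otimes>\<^bsub>G Mod H\<^esub> YY = YY \<otimes>\<^bsub>G Mod H\<^esub> XX" .
qed

context FG begin

lemma BC:
  assumes NN: "N \<lhd> F" and NF': "N \<subseteq> derived F (carrier F)"
  shows "(derived F (carrier F) = N <#>\<^bsub>F\<^esub> derived F (ker_phi n))
     \<longleftrightarrow> comm_group ((F Mod N) Mod ((\<lambda>w. N #>\<^bsub>F\<^esub> w) ` derived F (ker_phi n)))"
proof -
  let ?K' = "derived F (ker_phi n)" and ?F' = "derived F (carrier F)"
  let ?G1 = "F Mod N" and ?p = "\<lambda>w. N #>\<^bsub>F\<^esub> w"
  interpret N: normal N F by (rule NN)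
  have K'N: "?K' \<lhd> F" by (rule G.derived_is_normal[OF K_normal])
  interpret K': normal ?K' F by (rule K'N)
  have K'F': "?K' \<subseteq> ?F'" by (rule G.mono_derived) (auto simp: ker_phi_def)
  interpret F': subgroup ?F' F by (rule G.derived_is_subgroup) simp
  interpret G1: group ?G1 by (rule N.factorgroup_is_group)
  interpret p: group_hom F ?G1 ?p
    unfolding group_hom_def group_hom_axioms_def
    using G.is_group G1.is_group N.r_coset_hom_Mod by blast
  have psurj: "?p ` carrier F = carrier ?G1" by (auto simp: FactGroup_def RCOSETS_def)
  have HN: "?p ` ?K' \<lhd> ?G1" by (rule K'.surj_hom_normal_subgroup[OF p.group_hom_axioms psurj])
  have dimg: "derived ?G1 (carrier ?G1) = ?p ` ?F'"
    using p.derived_img[of "carrier F"] psurj by simp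
  have NK_sub: "N <#>\<^bsub>F\<^esub> ?K' \<subseteq> ?F'"
    using NF' K'F' by (auto simp: set_mult_def intro: F'.m_closed)
  have pNK: "?p (m \<otimes>\<^bsub>F\<^esub> k) = ?p k" if "m \<in> N" "k \<in> carrier F" for m k
  proof -
    have "N #>\<^bsub>F\<^esub> (m \<otimes>\<^bsub>F\<^esub> k) = (N #>\<^bsub>F\<^esub> m) #>\<^bsub>F\<^esub> k"
      using that N.subset by (simp add: G.coset_mult_assoc)
    also have "N #>\<^bsub>F\<^esub> m = N" using that by (simp add: N.rcos_const G.is_group)
    finally show ?thesis .
  qed
  show ?thesis
  proof
    assume B: "?F' = N <#>\<^bsub>F\<^esub> ?K'"
    show "comm_group (?G1 Mod ?p ` ?K')"
    proof (rule G1.comm_quotI[OF HN])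
      show "derived ?G1 (carrier ?G1) \<subseteq> ?p ` ?K'"
      proof
        fix XX assume "XX \<in> derived ?G1 (carrier ?G1)"
        then obtain w where w: "w \<in> ?F'" "XX = ?p w" using dimg by auto
        then obtain m k where mk: "m \<in> N" "k \<in> ?K'" "w = m \<otimes>\<^bsub>F\<^esub> k"
          using B by (auto simp: set_mult_def)
        have "XX = ?p k" unfolding w(2) mk(3)
          by (rule pNK[OF mk(1)]) (use mk(2) K'.subset in blast)
        then show "XX \<in> ?p ` ?K'" using mk by blast
      qed
    qed
  next
    assume C: "comm_group (?G1 Mod ?p ` ?K')"
    have "derived ?G1 (carrier ?G1) \<subseteq> ?p ` ?K'" by (rule G1.derived_minimal[OF HN C])
    then have sub: "?p ` ?F' \<subseteq> ?p ` ?K'" using dimg by simp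
    show "?F' = N <#>\<^bsub>F\<^esub> ?K'"
    proof
      show "?F' \<subseteq> N <#>\<^bsub>F\<^esub> ?K'"
      proof
        fix w assume w: "w \<in> ?F'"
        then obtain k where k: "k \<in> ?K'" "N #>\<^bsub>F\<^esub> w = N #>\<^bsub>F\<^esub> k" using sub by blast
        have wc: "w \<in> carrier F" using w F'.subset by blast
        have kc: "k \<in> carrier F" using k K'.subset by blast
        have "w \<in> N #>\<^bsub>F\<^esub> k" using k(2) G.rcos_self[OF wc N.subgroup_axioms] by simp
        then obtain m where m: "m \<in> N" "w = m \<otimes>\<^bsub>F\<^esub> k" unfolding r_coset_def by blast
        then show "w \<in> N <#>\<^bsub>F\<^esub> ?K'" using k(1) by (auto simp: set_mult_def)
      qed
    qed (rule NK_sub)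
  qed
qed

end



theorem theorem7p1:
  fixes n \<nu> :: nat and R :: "nat \<Rightarrow> word"
  defines "F \<equiv> free_group n"
  defines "K \<equiv> ker_phi n"
  defines "N \<equiv> normal_closure F (R ` {..<\<nu>})"
  assumes rel_in_F: "\<And>j. j < \<nu> \<Longrightarrow> R j \<in> carrier F"
    and rel_comm: "\<And>j. j < \<nu> \<Longrightarrow> R j \<in> derived F (carrier F)"
  shows "(fox_module n \<nu> R = target_module n
            \<longleftrightarrow> derived F (carrier F) = N <#>\<^bsub>F\<^esub> derived F K)
       \<and> (derived F (carrier F) = N <#>\<^bsub>F\<^esub> derived F K
            \<longleftrightarrow> comm_group ((F Mod N) Mod ((\<lambda>w. N #>\<^bsub>F\<^esub> w) ` derived F K)))"
proof -
  interpret FG n .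
  note RF = rel_in_F[unfolded F_def] and RD = rel_comm[unfolded F_def]
  let ?N = "normal_closure (free_group n) (R ` {..<\<nu>})"
  let ?F' = "derived (free_group n) (carrier (free_group n))"
  let ?K' = "derived (free_group n) (ker_phi n)"
  have NN: "?N \<lhd> free_group n" by (rule N_normal[OF RF])
  have Np: "w \<in> ?N \<Longrightarrow> w \<in> ?F' \<and> w \<in> ker_phi n \<and> fv w \<in> fox_module n \<nu> R" for w
    by (rule N_props[OF RF RD])
  have NF': "?N \<subseteq> ?F'" using Np by blast
  have NK: "?N \<subseteq> ker_phi n" using Np by blast
  have Kmem: "x \<in> ker_phi n \<longleftrightarrow> x \<in> carrier (free_group n) \<and> exp_sum x = 0" for x by (simp add: ker_phi_def)
  interpret K': subgroup ?K' "free_group n" by (rule G.derived_is_subgroup) (auto simp: ker_phi_def)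
  have RN: "R j \<in> ?N" if j: "j < \<nu>" for j
  proof -
    have "\<one>\<^bsub>free_group n\<^esub> \<otimes>\<^bsub>free_group n\<^esub> R j \<otimes>\<^bsub>free_group n\<^esub> inv\<^bsub>free_group n\<^esub> \<one>\<^bsub>free_group n\<^esub> \<in> ?N"
      unfolding normal_closure_def using j by (intro generate.incl) blast
    then show ?thesis using RF[OF j] by simp
  qed
  have modN: "fox_module n \<nu> R \<subseteq> fv ` ?N"
  proof (rule fox_module_sub)
    show "lclosed (fv ` ?N)" by (rule normal_fv_lclosed[OF NN NK])
    fix j assume j: "j < \<nu>"
    show "(\<lambda>i. if i < n then fox_phi i (R j) else 0) \<in> fv ` ?N"
      using RN[OF j] unfolding fv_def by blast
  qed
  have AB: "fox_module n \<nu> R = target_module n \<longleftrightarrow> ?F' = ?N <#>\<^bsub>free_group n\<^esub> ?K'"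
  proof
    assume A: "fox_module n \<nu> R = target_module n"
    show "?F' = ?N <#>\<^bsub>free_group n\<^esub> ?K'"
    proof
      show "?F' \<subseteq> ?N <#>\<^bsub>free_group n\<^esub> ?K'"
      proof
        fix w assume w: "w \<in> ?F'"
        then have wK: "w \<in> ker_phi n" and "fv w \<in> target_module n" using F'_props by auto
        then have "fv w \<in> fv ` ?N" using A modN by blast
        then obtain m where m: "m \<in> ?N" "fv w = fv m" by auto
        have mK: "m \<in> ker_phi n" using Np[OF m(1)] by blast
        define k where "k = inv\<^bsub>free_group n\<^esub> m \<otimes>\<^bsub>free_group n\<^esub> w"
        have kK: "k \<in> ker_phi n" using mK wK by (simp add: k_def Kmem es_mult es_inv)
        have "fv k = (\<lambda>i. - fv m i + fv w i)"
          using mK by (simp add: k_def Kmem es_inv fv_mult0 fv_inv0)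
        then have "fv k = (\<lambda>i. 0)" using m(2) by simp
        then have "\<And>i. i < n \<Longrightarrow> fox_phi i k = 0" unfolding fv_def by (metis (full_types))
        then have "k \<in> ?K'" by (rule core[OF kK])
        moreover have "w = m \<otimes>\<^bsub>free_group n\<^esub> k"
          using mK wK by (simp add: k_def Kmem G.m_assoc[symmetric])
        ultimately show "w \<in> ?N <#>\<^bsub>free_group n\<^esub> ?K'" using m(1) by (auto simp: set_mult_def)
      qed
    next
      have K'F': "?K' \<subseteq> ?F'" by (rule G.mono_derived) (auto simp: ker_phi_def)
      interpret F': subgroup ?F' "free_group n" by (rule G.derived_is_subgroup) simp
      show "?N <#>\<^bsub>free_group n\<^esub> ?K' \<subseteq> ?F'"
        using NF' K'F' by (auto simp: set_mult_def intro: F'.m_closed)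
    qed
  next
    assume B: "?F' = ?N <#>\<^bsub>free_group n\<^esub> ?K'"
    show "fox_module n \<nu> R = target_module n"
    proof
      show "fox_module n \<nu> R \<subseteq> target_module n"
        using modN NF' F'_props by blast
      show "target_module n \<subseteq> fox_module n \<nu> R"
      proof
        fix x assume "x \<in> target_module n"
        then obtain w where w: "w \<in> ?F'" "x = fv w" using target_sub_F' by blast
        then obtain m k where mk: "m \<in> ?N" "k \<in> ?K'" "w = m \<otimes>\<^bsub>free_group n\<^esub> k"
          using B by (auto simp: set_mult_def)
        have "fv w = (\<lambda>i. fv m i + fv k i)" using Np[OF mk(1)] by (simp add: mk(3) Kmem fv_mult0)
        also have "fv k = (\<lambda>i. 0)" using K'_props[OF mk(2)] by blast
        finally show "x \<in> fox_module n \<nu> R" using w Np[OF mk(1)] by simp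
      qed
    qed
  qed
  show ?thesis
    unfolding F_def K_def N_def
    using AB BC[OF NN NF'] by simp
qed


end
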